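(* Let $(F,+,\cdot)$ be a (left) near-field, $I$ an index set, and $\boldsymbol\sigma=(\sigma_i)_{i\in I}$, $\boldsymbol\rho=(\rho_i)_{i\in I}$ families of multiplicative automorphisms of $F$. Define an equivalence relation $\approx$ on $I$ by $i\approx j$ iff there is $\gamma\in F\setminus\{0\}$ such that $\sigma_i\circ\rho_i\circ\varphi_\gamma\circ(\sigma_j\circ\rho_j)^{-1}$ is a near-field automorphism of $(F,+,\cdot)$. Let $\mathcal T$ be a full set of representatives for $\approx$, for $t\in\mathcal T$ let $I_t$ be the class of $t$, $\boldsymbol\sigma_t=(\sigma_i)_{i\in I_t}$, $\boldsymbol\rho_t=(\rho_i)_{i\in I_t}$, and let $\Psi_t:F^{\boldsymbol\sigma_t,\boldsymbol\rho_t}\to F^{\boldsymbol\sigma,\boldsymbol\rho}$ send $(\alpha_i)_{i\in I_t}$ to $(\beta_i)_{i\in I}$ with $\beta_i=\alpha_i$ for $i\in I_t$ and $\beta_i=0$ otherwise. Then $\{\Psi_t(F^{\boldsymbol\sigma_t,\boldsymbol\rho_t})\}_{t\in\mathcal T}$ is a regular decomposition family for $F^{\boldsymbol\sigma,\boldsymbol\rho}$.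
   Context: A (left) near-field is $(F,+,\cdot,0,1)$ where $(F,\cdot,1)$ is a monoid, $(F\setminus\{0\},\cdot)$ is a group, $(F,+,0)$ is an abelian group, and $\alpha(\beta+\gamma)=\alpha\beta+\alpha\gamma$. A multiplicative automorphism is a monoid automorphism of $(F,\cdot)$; a near-field automorphism preserves both $+$ and $\cdot$. For $\tau$ multiplicative, $\alpha+_\tau\beta=\tau^{-1}(\tau(\alpha)+\tau(\beta))$; $\varphi_\gamma(\alpha)=\gamma^{-1}\alpha\gamma$. For families $\boldsymbol\sigma=(\sigma_i)_{i\in J}$, $\boldsymbol\rho=(\rho_i)_{i\in J}$, $F^{\boldsymbol\sigma,\boldsymbol\rho}$ is the set of finitely supported $(\alpha_i)_{i\in J}\in F^J$ with addition $(\alpha_i)+_{\boldsymbol\sigma}(\beta_i)=(\alpha_i+_{\sigma_i}\beta_i)$ and scalar multiplication $\alpha\cdot_{\boldsymbol\rho}(\alpha_i)=(\rho_i(\alpha)\alpha_i)$; it is a near-vector space over $F$. For a near-vector space $V$: the quasi-kernel is $Q(V)=\{u:\forall\alpha,\beta\ \exists\gamma,\ \alpha u+\beta u=\gamma u\}$; a subspace is a nonempty subset closed under addition and scalar multiplication; $u,v\in Q(V)\setminus\{0\}$ are compatible if $u+\lambda v\in Q(V)$ for some $\lambda\in F\setminus\{0\}$; $V$ is regular if any two elements of $Q(V)\setminus\{0\}$ are compatible; a maximal regular subspace is a subspace that is regular (as a near-vector space) and maximal under inclusion among such. A family $\{V_i\}$ of subspaces of $V$ is a regular decomposition family if $V=\bigoplus_i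 V_i$ (internal direct sum) and each $V_i$ is a maximal regular subspace of $V$. *)

theory Defs
  imports Main
begin

definition near_field :: "('a \<Rightarrow> 'a \<Rightarrow> 'a) \<Rightarrow> ('a \<Rightarrow> 'a \<Rightarrow> 'a) \<Rightarrow> 'a \<Rightarrow> 'a \<Rightarrow> bool" where
  "near_field add mul zero one \<longleftrightarrow>
     (\<forall>a b c. add (add a b) c = add a (add b c)) \<and>
     (\<forall>a b. add a b = add b a) \<and>
     (\<forall>a. add zero a = a) \<and>
     (\<forall>a. \<exists>b. add a b = zero) \<and>
     (\<forall>a b c. mul (mul a b) c = mul a (mul b c)) \<and>
     (\<forall>a. mul one a = a \<and> mul a one = a) \<and>
     one \<noteq> zero \<and>
     (\<forall>a b. a \<noteq> zero \<longrightarrow> b \<noteq> zero \<longrightarrow> mul a b \<noteq> zero) \<and>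
     (\<forall>a. a \<noteq> zero \<longrightarrow> (\<exists>b. b \<noteq> zero \<and> mul a b = one \<and> mul b a = one)) \<and>
     (\<forall>a b c. mul a (add b c) = add (mul a b) (mul a c))"

definition mult_aut :: "('a \<Rightarrow> 'a \<Rightarrow> 'a) \<Rightarrow> 'a \<Rightarrow> ('a \<Rightarrow> 'a) \<Rightarrow> bool" where
  "mult_aut mul one \<tau> \<longleftrightarrow> bij \<tau> \<and> (\<forall>a b. \<tau> (mul a b) = mul (\<tau> a) (\<tau> b)) \<and> \<tau> one = one"

definition nf_aut :: "('a \<Rightarrow> 'a \<Rightarrow> 'a) \<Rightarrow> ('a \<Rightarrow> 'a \<Rightarrow> 'a) \<Rightarrow> ('a \<Rightarrow> 'a) \<Rightarrow> bool" where
  "nf_aut add mul \<tau> \<longleftrightarrow> bij \<tau> \<and> (\<forall>a b. \<tau> (add a b) = add (\<tau> a) (\<tau> b))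
                                \<and> (\<forall>a b. \<tau> (mul a b) = mul (\<tau> a) (\<tau> b))"

definition nf_inv :: "('a \<Rightarrow> 'a \<Rightarrow> 'a) \<Rightarrow> 'a \<Rightarrow> 'a \<Rightarrow> 'a" where
  "nf_inv mul one g = (SOME d. mul d g = one \<and> mul g d = one)"

definition conj_map :: "('a \<Rightarrow> 'a \<Rightarrow> 'a) \<Rightarrow> 'a \<Rightarrow> 'a \<Rightarrow> 'a \<Rightarrow> 'a" where
  "conj_map mul one g = (\<lambda>a. mul (mul (nf_inv mul one g) a) g)"

definition add_tw :: "('a \<Rightarrow> 'a \<Rightarrow> 'a) \<Rightarrow> ('a \<Rightarrow> 'a) \<Rightarrow> 'a \<Rightarrow> 'a \<Rightarrow> 'a" where
  "add_tw add \<tau> a b = inv \<tau> (add (\<tau> a) (\<tau> b))"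

definition idx_rel :: "('a \<Rightarrow> 'a \<Rightarrow> 'a) \<Rightarrow> ('a \<Rightarrow> 'a \<Rightarrow> 'a) \<Rightarrow> 'a \<Rightarrow> 'a \<Rightarrow>
    ('i \<Rightarrow> 'a \<Rightarrow> 'a) \<Rightarrow> ('i \<Rightarrow> 'a \<Rightarrow> 'a) \<Rightarrow> 'i \<Rightarrow> 'i \<Rightarrow> bool" where
  "idx_rel add mul zero one \<sigma> \<rho> i j \<longleftrightarrow>
     (\<exists>g. g \<noteq> zero \<and>
        nf_aut add mul (\<sigma> i \<circ> \<rho> i \<circ> conj_map mul one g \<circ> inv (\<sigma> j \<circ> \<rho> j)))"

definition full_reps :: "('i \<Rightarrow> 'i \<Rightarrow> bool) \<Rightarrow> 'i set \<Rightarrow> bool" where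
  "full_reps R T \<longleftrightarrow> (\<forall>i. \<exists>!t. t \<in> T \<and> R i t)"

text \<open>Finitely supported families indexed by J, represented as functions that are zero outside J.\<close>
definition fs_carrier :: "'a \<Rightarrow> 'i set \<Rightarrow> ('i \<Rightarrow> 'a) set" where
  "fs_carrier zero J = {f. finite {i. f i \<noteq> zero} \<and> (\<forall>i. i \<notin> J \<longrightarrow> f i = zero)}"

definition fs_add :: "('a \<Rightarrow> 'a \<Rightarrow> 'a) \<Rightarrow> 'a \<Rightarrow> ('i \<Rightarrow> 'a \<Rightarrow> 'a) \<Rightarrow> 'i set \<Rightarrow>
    ('i \<Rightarrow> 'a) \<Rightarrow> ('i \<Rightarrow> 'a) \<Rightarrow> ('i \<Rightarrow> 'a)" where
  "fs_add add zero \<sigma> J f g = (\<lambda>i. if i \<in> J then add_tw add (\<sigma> i) (f i) (g i) else zero)"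

definition fs_smul :: "('a \<Rightarrow> 'a \<Rightarrow> 'a) \<Rightarrow> 'a \<Rightarrow> ('i \<Rightarrow> 'a \<Rightarrow> 'a) \<Rightarrow> 'i set \<Rightarrow>
    'a \<Rightarrow> ('i \<Rightarrow> 'a) \<Rightarrow> ('i \<Rightarrow> 'a)" where
  "fs_smul mul zero \<rho> J a f = (\<lambda>i. if i \<in> J then mul (\<rho> i a) (f i) else zero)"

definition ext_zero :: "'a \<Rightarrow> 'i set \<Rightarrow> ('i \<Rightarrow> 'a) \<Rightarrow> ('i \<Rightarrow> 'a)" where
  "ext_zero zero J f = (\<lambda>i. if i \<in> J then f i else zero)"

definition quasi_kernel :: "'v set \<Rightarrow> ('v \<Rightarrow> 'v \<Rightarrow> 'v) \<Rightarrow> ('a \<Rightarrow> 'v \<Rightarrow> 'v) \<Rightarrow> 'v set" where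
  "quasi_kernel W vadd smul = {u \<in> W. \<forall>a b. \<exists>c. vadd (smul a u) (smul b u) = smul c u}"

definition subspace :: "'v set \<Rightarrow> ('v \<Rightarrow> 'v \<Rightarrow> 'v) \<Rightarrow> ('a \<Rightarrow> 'v \<Rightarrow> 'v) \<Rightarrow> 'v set \<Rightarrow> bool" where
  "subspace V vadd smul W \<longleftrightarrow> W \<subseteq> V \<and> W \<noteq> {} \<and>
     (\<forall>u\<in>W. \<forall>v\<in>W. vadd u v \<in> W) \<and> (\<forall>a. \<forall>u\<in>W. smul a u \<in> W)"

text \<open>Near-vector space in the sense of Andre: (W,+) abelian group, F acting by endomorphisms,
  fixed-point-freely, and W additively generated by its quasi-kernel.\<close>
definition near_vector_space :: "('a \<Rightarrow> 'a \<Rightarrow> 'a) \<Rightarrow> 'a \<Rightarrow> 'a \<Rightarrow>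
    'v set \<Rightarrow> ('v \<Rightarrow> 'v \<Rightarrow> 'v) \<Rightarrow> ('a \<Rightarrow> 'v \<Rightarrow> 'v) \<Rightarrow> 'v \<Rightarrow> bool" where
  "near_vector_space mul zero one W vadd smul vzero \<longleftrightarrow>
     vzero \<in> W \<and>
     (\<forall>u\<in>W. \<forall>v\<in>W. vadd u v \<in> W) \<and>
     (\<forall>u\<in>W. \<forall>v\<in>W. \<forall>w\<in>W. vadd (vadd u v) w = vadd u (vadd v w)) \<and>
     (\<forall>u\<in>W. \<forall>v\<in>W. vadd u v = vadd v u) \<and>
     (\<forall>u\<in>W. vadd vzero u = u) \<and>
     (\<forall>u\<in>W. \<exists>v\<in>W. vadd u v = vzero) \<and>
     (\<forall>a. \<forall>u\<in>W. smul a u \<in> W) \<and>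
     (\<forall>a. \<forall>u\<in>W. \<forall>v\<in>W. smul a (vadd u v) = vadd (smul a u) (smul a v)) \<and>
     (\<forall>a b. \<forall>u\<in>W. smul (mul a b) u = smul a (smul b u)) \<and>
     (\<forall>u\<in>W. smul one u = u) \<and>
     (\<forall>u\<in>W. smul zero u = vzero) \<and>
     (\<forall>a b. \<forall>u\<in>W. smul a u = smul b u \<longrightarrow> u = vzero \<or> a = b) \<and>
     (\<forall>u\<in>W. \<exists>us. set us \<subseteq> quasi_kernel W vadd smul \<and> u = foldr vadd us vzero)"

definition compatible :: "'a \<Rightarrow> 'v set \<Rightarrow> ('v \<Rightarrow> 'v \<Rightarrow> 'v) \<Rightarrow> ('a \<Rightarrow> 'v \<Rightarrow> 'v) \<Rightarrow> 'v \<Rightarrow> 'v \<Rightarrow> bool" where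
  "compatible zero W vadd smul u v \<longleftrightarrow>
     (\<exists>l. l \<noteq> zero \<and> vadd u (smul l v) \<in> quasi_kernel W vadd smul)"

definition regular_nvs :: "('a \<Rightarrow> 'a \<Rightarrow> 'a) \<Rightarrow> 'a \<Rightarrow> 'a \<Rightarrow>
    'v set \<Rightarrow> ('v \<Rightarrow> 'v \<Rightarrow> 'v) \<Rightarrow> ('a \<Rightarrow> 'v \<Rightarrow> 'v) \<Rightarrow> 'v \<Rightarrow> bool" where
  "regular_nvs mul zero one W vadd smul vzero \<longleftrightarrow>
     near_vector_space mul zero one W vadd smul vzero \<and>
     (\<forall>u \<in> quasi_kernel W vadd smul - {vzero}. \<forall>v \<in> quasi_kernel W vadd smul - {vzero}.
        compatible zero W vadd smul u v)"

definition max_regular_subspace :: "('a \<Rightarrow> 'a \<Rightarrow> 'a) \<Rightarrow> 'a \<Rightarrow> 'a \<Rightarrow>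
    'v set \<Rightarrow> ('v \<Rightarrow> 'v \<Rightarrow> 'v) \<Rightarrow> ('a \<Rightarrow> 'v \<Rightarrow> 'v) \<Rightarrow> 'v \<Rightarrow> 'v set \<Rightarrow> bool" where
  "max_regular_subspace mul zero one V vadd smul vzero W \<longleftrightarrow>
     subspace V vadd smul W \<and> regular_nvs mul zero one W vadd smul vzero \<and>
     (\<forall>W'. subspace V vadd smul W' \<and> regular_nvs mul zero one W' vadd smul vzero \<and> W \<subseteq> W'
            \<longrightarrow> W' = W)"

definition internal_direct_sum :: "'v set \<Rightarrow> ('v \<Rightarrow> 'v \<Rightarrow> 'v) \<Rightarrow> 'v \<Rightarrow> 't set \<Rightarrow> ('t \<Rightarrow> 'v set) \<Rightarrow> bool" where
  "internal_direct_sum V vadd vzero T W \<longleftrightarrow>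
     (\<forall>t\<in>T. W t \<subseteq> V) \<and>
     (\<forall>v\<in>V. \<exists>ts g. distinct ts \<and> set ts \<subseteq> T \<and> (\<forall>t\<in>set ts. g t \<in> W t) \<and>
                   v = foldr (\<lambda>t acc. vadd (g t) acc) ts vzero) \<and>
     (\<forall>ts g. distinct ts \<and> set ts \<subseteq> T \<and> (\<forall>t\<in>set ts. g t \<in> W t) \<and>
             foldr (\<lambda>t acc. vadd (g t) acc) ts vzero = vzero \<longrightarrow> (\<forall>t\<in>set ts. g t = vzero))"

definition regular_decomposition_family :: "('a \<Rightarrow> 'a \<Rightarrow> 'a) \<Rightarrow> 'a \<Rightarrow> 'a \<Rightarrow>
    'v set \<Rightarrow> ('v \<Rightarrow> 'v \<Rightarrow> 'v) \<Rightarrow> ('a \<Rightarrow> 'v \<Rightarrow> 'v) \<Rightarrow> 'v \<Rightarrow> 't set \<Rightarrow> ('t \<Rightarrow> 'v set) \<Rightarrow> bool" where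
  "regular_decomposition_family mul zero one V vadd smul vzero T W \<longleftrightarrow>
     internal_direct_sum V vadd vzero T W \<and>
     (\<forall>t\<in>T. max_regular_subspace mul zero one V vadd smul vzero (W t))"

end

theory Submission
  imports Defs
begin

locale nfl =
  fixes add mul :: "'a \<Rightarrow> 'a \<Rightarrow> 'a" and zero one :: 'a
  assumes nf: "near_field add mul zero one"
begin

abbreviation ninv where "ninv \<equiv> nf_inv mul one"

lemma add_assoc: "add (add a b) c = add a (add b c)" using nf unfolding near_field_def by blast
lemma add_comm: "add a b = add b a" using nf unfolding near_field_def by blast
lemma add_0[simp]: "add zero a = a" using nf unfolding near_field_def by blast
lemma add_0_right[simp]: "add a zero = a" using add_comm add_0 by metis
lemma neg_ex: "\<exists>b. add a b = zero" using nf unfolding near_field_def by blast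
lemma mul_assoc: "mul (mul a b) c = mul a (mul b c)" using nf unfolding near_field_def by blast
lemma mul_1[simp]: "mul one a = a" using nf unfolding near_field_def by blast
lemma mul_1_right[simp]: "mul a one = a" using nf unfolding near_field_def by blast
lemma one_neq_zero[simp]: "one \<noteq> zero" using nf unfolding near_field_def by blast
lemma zero_neq_one[simp]: "zero \<noteq> one" using one_neq_zero by metis
lemma mul_nz: "a \<noteq> zero \<Longrightarrow> b \<noteq> zero \<Longrightarrow> mul a b \<noteq> zero" using nf unfolding near_field_def by blast
lemma inv_ex: "a \<noteq> zero \<Longrightarrow> \<exists>b. b \<noteq> zero \<and> mul a b = one \<and> mul b a = one" using nf unfolding near_field_def by blast
lemma distrib: "mul a (add b c) = add (mul a b) (mul a c)" using nf unfolding near_field_def by blast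

sublocale A: abel_semigroup add by unfold_locales (rule add_assoc, rule add_comm)
sublocale M: monoid mul one by unfold_locales (rule mul_assoc, rule mul_1, rule mul_1_right)

lemma add_left_cancel: assumes "add a b = add a c" shows "b = c"
proof -
  obtain n where n: "add a n = zero" using neg_ex by blast
  have "add n (add a b) = add n (add a c)" using assms by simp
  then have "add (add n a) b = add (add n a) c" by (simp add: add_assoc)
  then show ?thesis using n add_comm add_0 by metis
qed

lemma mul_0_right[simp]: "mul a zero = zero"
proof -
  have "add (mul a zero) (mul a zero) = add (mul a zero) zero"
    using distrib[of a zero zero] by simp
  then show ?thesis by (rule add_left_cancel)
qed

lemma ninv: assumes "g \<noteq> zero" shows "mul (ninv g) g = one \<and> mul g (ninv g) = one"
  unfolding nf_inv_def
proof (rule someI_ex)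
  obtain b where "b \<noteq> zero \<and> mul g b = one \<and> mul b g = one" using inv_ex[OF assms] by blast
  then show "\<exists>d. mul d g = one \<and> mul g d = one" by blast
qed

lemma ninv_l[simp]: "g \<noteq> zero \<Longrightarrow> mul (ninv g) g = one" using ninv by blast
lemma ninv_r[simp]: "g \<noteq> zero \<Longrightarrow> mul g (ninv g) = one" using ninv by blast
lemma ninv_l2[simp]: "g \<noteq> zero \<Longrightarrow> mul (ninv g) (mul g x) = x"
  by (metis M.left_neutral mul_assoc ninv_l)
lemma ninv_r2[simp]: "g \<noteq> zero \<Longrightarrow> mul g (mul (ninv g) x) = x"
  by (metis M.left_neutral mul_assoc ninv_r)

lemma ninv_nz[simp]: "g \<noteq> zero \<Longrightarrow> ninv g \<noteq> zero"
  by (metis mul_0_right ninv_r one_neq_zero)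

lemma mul_0_left[simp]: "mul zero a = zero"
proof (cases "a = zero")
  case True then show ?thesis by simp
next
  case False
  have "mul (mul zero a) (ninv a) = zero" using False by (simp add: mul_assoc)
  then show ?thesis using mul_nz False ninv_nz by metis
qed

lemma mul_eq_0[simp]: "mul a b = zero \<longleftrightarrow> a = zero \<or> b = zero"
  using mul_nz by auto

lemma mul_left_cancel: "a \<noteq> zero \<Longrightarrow> mul a b = mul a c \<Longrightarrow> b = c"
  by (metis ninv_l2)

lemma mul_right_cancel: "c \<noteq> zero \<Longrightarrow> mul a c = mul b c \<Longrightarrow> a = b"
  by (metis M.right_neutral mul_assoc ninv_r)

lemma ninv_unique: "g \<noteq> zero \<Longrightarrow> mul x g = one \<Longrightarrow> ninv g = x"
  by (metis mul_right_cancel ninv_l)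

lemma ninv_one[simp]: "ninv one = one"
  using ninv_unique[of one one] by simp

lemma mulinv_r2[simp]: "g \<noteq> zero \<Longrightarrow> mul (mul x g) (ninv g) = x"
  by (simp add: mul_assoc)
lemma mulinv_l2[simp]: "g \<noteq> zero \<Longrightarrow> mul (mul x (ninv g)) g = x"
  by (simp add: mul_assoc)

definition neg where "neg a = (SOME b. add a b = zero)"
lemma neg[simp]: "add a (neg a) = zero"
  unfolding neg_def by (rule someI_ex) (rule neg_ex)
lemma neg_zero[simp]: "neg zero = zero"
  by (metis neg add_0)

lemma add_zero_cancel: "add a b = a \<Longrightarrow> b = zero"
  using add_left_cancel[of a b zero] by simp

lemma maut_0[simp]: assumes "mult_aut mul one \<tau>" shows "\<tau> zero = zero"
proof -
  have "surj \<tau>" using assms unfolding mult_aut_def by (simp add: bij_is_surj)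
  then obtain x where x: "\<tau> x = zero" by (metis surj_def)
  have "\<tau> zero = \<tau> (mul zero x)" by simp
  also have "\<dots> = mul (\<tau> zero) (\<tau> x)" using assms unfolding mult_aut_def by blast
  finally show ?thesis using x by simp
qed

lemma maut_bij: "mult_aut mul one \<tau> \<Longrightarrow> bij \<tau>" unfolding mult_aut_def by blast
lemma maut_mul: "mult_aut mul one \<tau> \<Longrightarrow> \<tau> (mul a b) = mul (\<tau> a) (\<tau> b)" unfolding mult_aut_def by blast
lemma maut_one: "mult_aut mul one \<tau> \<Longrightarrow> \<tau> one = one" unfolding mult_aut_def by blast
lemma maut_inj: assumes "mult_aut mul one \<tau>" shows "\<tau> a = \<tau> b \<longleftrightarrow> a = b"
proof -
  have "inj \<tau>" using assms by (simp add: maut_bij bij_is_inj)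
  then show ?thesis by (simp add: inj_eq)
qed
lemma maut_eq0: "mult_aut mul one \<tau> \<Longrightarrow> \<tau> a = zero \<longleftrightarrow> a = zero"
  using maut_inj[of \<tau> a zero] by simp
lemma maut_inv_apply: "mult_aut mul one \<tau> \<Longrightarrow> \<tau> (inv \<tau> x) = x"
  by (rule surj_f_inv_f[OF bij_is_surj[OF maut_bij]])
lemma maut_inv_apply2: "mult_aut mul one \<tau> \<Longrightarrow> inv \<tau> (\<tau> x) = x"
  by (rule inv_f_f[OF bij_is_inj[OF maut_bij]])
lemma maut_ninv: assumes "mult_aut mul one \<tau>" "a \<noteq> zero" shows "\<tau> (ninv a) = ninv (\<tau> a)"
proof -
  have "mul (\<tau> (ninv a)) (\<tau> a) = one" using assms by (simp add: maut_mul[symmetric] maut_one)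
  moreover have "\<tau> a \<noteq> zero" using assms by (simp add: maut_eq0)
  ultimately show ?thesis by (simp add: ninv_unique)
qed

lemma maut_inv: assumes "mult_aut mul one \<tau>" shows "mult_aut mul one (inv \<tau>)"
  unfolding mult_aut_def
proof (intro conjI allI)
  show "bij (inv \<tau>)" using maut_bij[OF assms] by (simp add: bij_imp_bij_inv)
  fix a b 
  have "\<tau> (mul (inv \<tau> a) (inv \<tau> b)) = mul a b" using assms by (simp add: maut_mul maut_inv_apply)
  then show "inv \<tau> (mul a b) = mul (inv \<tau> a) (inv \<tau> b)"
    using assms maut_inv_apply2 by metis
next
  show "inv \<tau> one = one" using assms maut_inv_apply2 maut_one by metis
qed

lemma maut_comp: "mult_aut mul one \<tau>1 \<Longrightarrow> mult_aut mul one \<tau>2 \<Longrightarrow> mult_aut mul one (\<tau>1 \<circ> \<tau>2)"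
  unfolding mult_aut_def by (auto intro: bij_comp)

end

locale nvs = nfl add mul zero one
  for add mul :: "'a \<Rightarrow> 'a \<Rightarrow> 'a" and zero one :: 'a +
  fixes \<sigma> \<rho> :: "'i \<Rightarrow> 'a \<Rightarrow> 'a"
  assumes sig: "\<forall>i. mult_aut mul one (\<sigma> i)" and rh: "\<forall>i. mult_aut mul one (\<rho> i)"
begin

definition tau where "tau i = \<sigma> i \<circ> \<rho> i"
abbreviation R where "R \<equiv> idx_rel add mul zero one \<sigma> \<rho>"
abbreviation vadd where "vadd \<equiv> fs_add add zero \<sigma> UNIV"
abbreviation smul where "smul \<equiv> fs_smul mul zero \<rho> UNIV"
abbreviation vz where "vz \<equiv> (\<lambda>i::'i. zero)"

lemma sg: "mult_aut mul one (\<sigma> i)" using sig by blast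
lemma rg: "mult_aut mul one (\<rho> i)" using rh by blast
lemma tg: "mult_aut mul one (tau i)" unfolding tau_def by (rule maut_comp[OF sg rg])
lemma sig0[simp]: "\<sigma> i zero = zero" by (rule maut_0[OF sg])
lemma rho0[simp]: "\<rho> i zero = zero" by (rule maut_0[OF rg])
lemma tau0[simp]: "tau i zero = zero" by (rule maut_0[OF tg])
lemma siginv0[simp]: "inv (\<sigma> i) zero = zero" by (rule maut_0[OF maut_inv[OF sg]])
lemma tauinv0[simp]: "inv (tau i) zero = zero" by (rule maut_0[OF maut_inv[OF tg]])
lemma sig_ia[simp]: "\<sigma> i (inv (\<sigma> i) x) = x" by (rule maut_inv_apply[OF sg])
lemma sig_ia2[simp]: "inv (\<sigma> i) (\<sigma> i x) = x" by (rule maut_inv_apply2[OF sg])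
lemma tau_ia[simp]: "tau i (inv (tau i) x) = x" by (rule maut_inv_apply[OF tg])
lemma tau_ia2[simp]: "inv (tau i) (tau i x) = x" by (rule maut_inv_apply2[OF tg])
lemma sig_eq0[simp]: "\<sigma> i a = zero \<longleftrightarrow> a = zero" by (rule maut_eq0[OF sg])
lemma rho_eq0[simp]: "\<rho> i a = zero \<longleftrightarrow> a = zero" by (rule maut_eq0[OF rg])
lemma tau_eq0[simp]: "tau i a = zero \<longleftrightarrow> a = zero" by (rule maut_eq0[OF tg])
lemma siginv_eq0[simp]: "inv (\<sigma> i) a = zero \<longleftrightarrow> a = zero" by (rule maut_eq0[OF maut_inv[OF sg]])
lemma tauinv_eq0[simp]: "inv (tau i) a = zero \<longleftrightarrow> a = zero" by (rule maut_eq0[OF maut_inv[OF tg]])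
lemma sig_inj[simp]: "\<sigma> i a = \<sigma> i b \<longleftrightarrow> a = b" by (rule maut_inj[OF sg])
lemma rho_inj[simp]: "\<rho> i a = \<rho> i b \<longleftrightarrow> a = b" by (rule maut_inj[OF rg])
lemma tau_inj[simp]: "tau i a = tau i b \<longleftrightarrow> a = b" by (rule maut_inj[OF tg])
lemma rho_one[simp]: "\<rho> i one = one" by (rule maut_one[OF rg])
lemma sig_one[simp]: "\<sigma> i one = one" by (rule maut_one[OF sg])
lemma tau_mul: "tau i (mul a b) = mul (tau i a) (tau i b)" by (rule maut_mul[OF tg])
lemma rho_mul: "\<rho> i (mul a b) = mul (\<rho> i a) (\<rho> i b)" by (rule maut_mul[OF rg])
lemma tau_apply: "tau i x = \<sigma> i (\<rho> i x)" by (simp add: tau_def)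
lemma sig_rho_mul: "\<sigma> i (mul (\<rho> i a) x) = mul (tau i a) (\<sigma> i x)"
  by (simp add: maut_mul[OF sg] tau_apply)

lemma inv_eq: "inv (\<sigma> i) y = x \<longleftrightarrow> y = \<sigma> i x" by (metis sig_ia sig_ia2)

lemma vadd_apply: "vadd f g i = inv (\<sigma> i) (add (\<sigma> i (f i)) (\<sigma> i (g i)))"
  by (simp add: fs_add_def add_tw_def)
lemma smul_apply[simp]: "smul a f i = mul (\<rho> i a) (f i)"
  by (simp add: fs_smul_def)
lemma sig_vadd[simp]: "\<sigma> i (vadd f g i) = add (\<sigma> i (f i)) (\<sigma> i (g i))"
  by (simp add: vadd_apply)
lemma vadd_0l: "f i = zero \<Longrightarrow> vadd f g i = g i" by (simp add: vadd_apply)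
lemma vadd_0r: "g i = zero \<Longrightarrow> vadd f g i = f i" by (simp add: vadd_apply)

definition P where "P k w a b c \<longleftrightarrow> add (mul (tau k a) w) (mul (tau k b) w) = mul (tau k c) w"

lemma vadd_eq_iff: "vadd f g k = z \<longleftrightarrow> add (\<sigma> k (f k)) (\<sigma> k (g k)) = \<sigma> k z"
  by (simp add: vadd_apply inv_eq)

lemma vss_eq: "vadd (smul a f) (smul b f) = smul c f \<longleftrightarrow> (\<forall>k. P k (\<sigma> k (f k)) a b c)"
  by (simp add: fun_eq_iff vadd_eq_iff P_def sig_rho_mul)

lemma qk_iff: "u \<in> quasi_kernel W vadd smul \<longleftrightarrow> u \<in> W \<and> (\<forall>a b. \<exists>c. \<forall>k. P k (\<sigma> k (u k)) a b c)"
  by (simp add: quasi_kernel_def vss_eq)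

lemma P_zero: "P k zero a b c" by (simp add: P_def)

lemma P_ex: "\<exists>c. P k w a b c"
proof (cases "w = zero")
  case True then show ?thesis using P_zero by blast
next
  case False
  define c where "c = inv (tau k) (mul (add (mul (tau k a) w) (mul (tau k b) w)) (ninv w))"
  have "P k w a b c" unfolding P_def c_def using False by simp
  then show ?thesis by blast
qed

lemma P_unique: "w \<noteq> zero \<Longrightarrow> P k w a b c \<Longrightarrow> P k w a b c' \<Longrightarrow> c = c'"
  unfolding P_def by (metis mul_right_cancel tau_inj)

lemma P_scale: "P k (mul (tau k l) w) a b c \<longleftrightarrow> P k w (mul a l) (mul b l) (mul c l)"
  by (simp add: P_def tau_mul mul_assoc)

lemma P_add: "P k w1 a b c \<Longrightarrow> P k w2 a b c \<Longrightarrow> P k (add w1 w2) a b c"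
proof -
  assume h1: "P k w1 a b c" and h2: "P k w2 a b c"
  have ac: "add (add x1 x2) (add y1 y2) = add (add x1 y1) (add x2 y2)" for x1 x2 y1 y2
    by (simp add: A.assoc A.commute A.left_commute)
  show ?thesis using h1 h2 unfolding P_def distrib by (metis ac)
qed

lemma conj_apply: "conj_map mul one g x = mul (mul (ninv g) x) g" by (simp add: conj_map_def)

lemma conj_bij: assumes "g \<noteq> zero" shows "bij (conj_map mul one g)"
  unfolding bij_def
proof
  show "inj (conj_map mul one g)"
    by (rule injI) (metis assms conj_apply mul_right_cancel mul_left_cancel ninv_nz)
  show "surj (conj_map mul one g)"
    by (rule surjI[where f="\<lambda>x. mul (mul g x) (ninv g)"]) (simp add: conj_apply assms mul_assoc)
qed

lemma conj_mul: "g \<noteq> zero \<Longrightarrow> conj_map mul one g (mul x y) = mul (conj_map mul one g x) (conj_map mul one g y)"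
  by (simp add: conj_apply mul_assoc)

end

context nvs
begin

lemma key: assumes Q: "\<forall>a b. \<exists>c. \<forall>k. P k (w k) a b c" and wi: "w i \<noteq> zero" and wj: "w j \<noteq> zero"
  shows "R i j"
proof -
  define p where "p = inv (tau j) (w j)"
  define q where "q = inv (tau i) (w i)"
  have pnz: "p \<noteq> zero" and qnz: "q \<noteq> zero" using wi wj by (simp_all add: p_def q_def)
  have tp: "tau j p = w j" and tq: "tau i q = w i" by (simp_all add: p_def q_def)
  define g where "g = mul (ninv p) q"
  have gnz: "g \<noteq> zero" using pnz qnz by (simp add: g_def)
  have ginv: "ninv g = mul (ninv q) p"
    by (rule ninv_unique[OF gnz]) (simp add: g_def mul_assoc pnz qnz)
  define al where "al x = mul (mul p (inv (tau j) x)) (ninv p)" for x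
  define B where "B x = tau i (conj_map mul one g (inv (tau j) x))" for x
  have B_eq: "B x = mul (ninv (w i)) (mul (tau i (al x)) (w i))" for x
  proof -
    have "conj_map mul one g (inv (tau j) x) = mul (ninv q) (mul (al x) q)"
      unfolding conj_apply ginv by (simp add: g_def al_def mul_assoc)
    then show ?thesis
      by (simp add: B_def tau_mul maut_ninv[OF tg] qnz tq)
  qed
  have tal: "mul (tau j (al x)) (w j) = mul (w j) x" for x
    by (simp add: al_def tau_mul maut_ninv[OF tg] pnz tp wj)
  have Badd: "B (add x y) = add (B x) (B y)" for x y
  proof -
    obtain c where c: "\<forall>k. P k (w k) (al x) (al y) c" using Q by blast
    have "mul (tau j c) (w j) = mul (w j) (add x y)"
      using c[rule_format, of j] unfolding P_def by (simp add: tal distrib)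
    then have "mul (tau j c) (w j) = mul (tau j (al (add x y))) (w j)" by (simp add: tal)
    then have "tau j c = tau j (al (add x y))" by (rule mul_right_cancel[OF wj])
    then have "c = al (add x y)" by simp
    then have e: "add (mul (tau i (al x)) (w i)) (mul (tau i (al y)) (w i)) = mul (tau i (al (add x y))) (w i)"
      using c[rule_format, of i] unfolding P_def by simp
    show ?thesis unfolding B_eq by (simp only: e[symmetric] distrib)
  qed
  have Bmul: "B (mul x y) = mul (B x) (B y)" for x y
    by (simp add: B_def maut_mul[OF maut_inv[OF tg]] conj_mul gnz tau_mul)
  have Bbij: "bij B"
  proof -
    have "B = tau i \<circ> conj_map mul one g \<circ> inv (tau j)" by (simp add: B_def fun_eq_iff)
    then show ?thesis
      using bij_comp[OF bij_comp[OF bij_imp_bij_inv[OF maut_bij[OF tg]] conj_bij[OF gnz]] maut_bij[OF tg]]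
      by (simp add: comp_assoc)
  qed
  have "\<sigma> i \<circ> \<rho> i \<circ> conj_map mul one g \<circ> inv (\<sigma> j \<circ> \<rho> j) = B"
    by (simp add: fun_eq_iff B_def tau_def)
  then have "nf_aut add mul (\<sigma> i \<circ> \<rho> i \<circ> conj_map mul one g \<circ> inv (\<sigma> j \<circ> \<rho> j))"
    using Badd Bmul Bbij unfolding nf_aut_def by simp
  then show ?thesis unfolding idx_rel_def using gnz by blast
qed

lemma liftA: assumes "R i t" "w \<noteq> zero"
  shows "\<exists>w'. w' \<noteq> zero \<and> (\<forall>a b c. P i w a b c \<longrightarrow> P t w' a b c)"
proof -
  from assms obtain g where gnz: "g \<noteq> zero"
    and aut: "nf_aut add mul (\<sigma> i \<circ> \<rho> i \<circ> conj_map mul one g \<circ> inv (\<sigma> t \<circ> \<rho> t))"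
    unfolding idx_rel_def by blast
  define B where "B = \<sigma> i \<circ> \<rho> i \<circ> conj_map mul one g \<circ> inv (\<sigma> t \<circ> \<rho> t)"
  have Bbij: "bij B" and Badd: "\<And>x y. B (add x y) = add (B x) (B y)"
    and Bmul: "\<And>x y. B (mul x y) = mul (B x) (B y)"
    using aut unfolding B_def nf_aut_def by blast+
  define d where "d = tau i g"
  have dnz: "d \<noteq> zero" using gnz by (simp add: d_def)
  have Btau: "B (tau t y) = mul (ninv d) (mul (tau i y) d)" for y
  proof -
    have "B (tau t y) = tau i (conj_map mul one g y)"
      by (simp add: B_def tau_def[symmetric])
    then show ?thesis by (simp add: conj_apply tau_mul maut_ninv[OF tg] gnz d_def mul_assoc)
  qed
  have tau_i: "tau i y = mul d (mul (B (tau t y)) (ninv d))" for y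
    by (simp add: Btau mul_assoc dnz)
  define w' where "w' = inv B (mul (ninv d) (w))"
  have Bw': "B w' = mul (ninv d) w" by (simp add: w'_def bij_is_surj surj_f_inv_f Bbij)
  have B0: "B zero = zero"
    using Badd[of zero zero] add_zero_cancel[of "B zero" "B zero"] by simp
  have w'nz: "w' \<noteq> zero"
  proof
    assume "w' = zero"
    then have "mul (ninv d) w = zero" using Bw' B0 by simp
    then show False using dnz assms(2) by simp
  qed
  have kk: "mul (tau i x) w = mul d (B (mul (tau t x) w'))" for x
    by (simp add: tau_i Bmul Bw' mul_assoc dnz)
  have Binj: "B x = B y \<longleftrightarrow> x = y" for x y using Bbij bij_is_inj inj_eq by metis
  have "P t w' a b c" if "P i w a b c" for a b c
  proof -
    have "add (mul d (B (mul (tau t a) w'))) (mul d (B (mul (tau t b) w'))) = mul d (B (mul (tau t c) w'))"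
      using that unfolding P_def kk .
    then have "mul d (B (add (mul (tau t a) w') (mul (tau t b) w'))) = mul d (B (mul (tau t c) w'))"
      by (simp add: Badd distrib)
    then show ?thesis unfolding P_def using dnz mul_left_cancel Binj by blast
  qed
  then show ?thesis using w'nz by blast
qed

end

context nvs
begin

abbreviation C where "C (J::'i set) \<equiv> fs_carrier zero J"
definition sv :: "'i \<Rightarrow> 'a \<Rightarrow> 'i \<Rightarrow> 'a" where "sv i x = (\<lambda>k. if k = i then x else zero)"

lemma C_mem: "f \<in> C J \<longleftrightarrow> finite {i. f i \<noteq> zero} \<and> (\<forall>i. i \<notin> J \<longrightarrow> f i = zero)"
  by (simp add: fs_carrier_def)
lemma C_vz: "vz \<in> C J" by (simp add: C_mem)
lemma C_add: assumes "f \<in> C J" "g \<in> C J" shows "vadd f g \<in> C J"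
proof -
  have "{i. vadd f g i \<noteq> zero} \<subseteq> {i. f i \<noteq> zero} \<union> {i. g i \<noteq> zero}"
    using vadd_0l by fastforce
  then show ?thesis using assms unfolding C_mem by (auto intro: finite_subset simp: vadd_0l)
qed
lemma C_smul: assumes "f \<in> C J" shows "smul a f \<in> C J"
proof -
  have "{i. smul a f i \<noteq> zero} \<subseteq> {i. f i \<noteq> zero}" by auto
  then show ?thesis using assms unfolding C_mem by (auto intro: finite_subset)
qed
lemma C_mono: "J \<subseteq> K \<Longrightarrow> C J \<subseteq> C K" unfolding subset_iff C_mem by blast

lemma vadd_assoc: "vadd (vadd f g) h = vadd f (vadd g h)"
  by (simp add: fun_eq_iff vadd_apply A.assoc)
lemma vadd_comm: "vadd f g = vadd g f"
  by (simp add: fun_eq_iff vadd_apply A.commute)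
lemma vadd_vz: "vadd vz u = u" by (simp add: fun_eq_iff vadd_0l)

definition nv where "nv u = (\<lambda>k. inv (\<sigma> k) (neg (\<sigma> k (u k))))"
lemma nv_C: assumes "u \<in> C J" shows "nv u \<in> C J"
proof -
  have z: "u i = zero \<Longrightarrow> nv u i = zero" for i by (simp add: nv_def)
  then have "{i. nv u i \<noteq> zero} \<subseteq> {i. u i \<noteq> zero}" by blast
  then show ?thesis using assms z unfolding C_mem by (meson finite_subset)
qed
lemma nv_add: "vadd u (nv u) = vz" by (simp add: fun_eq_iff vadd_apply nv_def)

lemma smul_vadd: "smul a (vadd u v) = vadd (smul a u) (smul a v)"
proof -
  have "vadd (smul a u) (smul a v) k = smul a (vadd u v) k" for k
    by (simp add: vadd_eq_iff sig_rho_mul distrib)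
  then show ?thesis by (simp add: fun_eq_iff)
qed
lemma smul_mul: "smul (mul a b) u = smul a (smul b u)"
  by (simp add: fun_eq_iff rho_mul mul_assoc)
lemma smul_one: "smul one u = u" by (simp add: fun_eq_iff)
lemma smul_zero: "smul zero u = vz" by (simp add: fun_eq_iff)
lemma ffree: assumes "smul a u = smul b u" shows "u = vz \<or> a = b"
proof (cases "u = vz")
  case False
  then obtain k where k: "u k \<noteq> zero" by auto
  have "mul (\<rho> k a) (u k) = mul (\<rho> k b) (u k)" using assms by (metis smul_apply)
  then have "\<rho> k a = \<rho> k b" by (rule mul_right_cancel[OF k])
  then show ?thesis by simp
qed simp

lemma sv_C: "x = zero \<or> i \<in> J \<Longrightarrow> sv i x \<in> C J"
proof -
  assume h: "x = zero \<or> i \<in> J"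
  have "{k. sv i x k \<noteq> zero} \<subseteq> {i}" by (auto simp: sv_def)
  then show ?thesis using h unfolding C_mem by (auto intro: finite_subset simp: sv_def)
qed

lemma sv_Q: "\<forall>a b. \<exists>c. \<forall>k. P k (\<sigma> k (sv i x k)) a b c"
proof (intro allI)
  fix a b
  obtain c where c: "P i (\<sigma> i x) a b c" using P_ex by blast
  have "P k (\<sigma> k (sv i x k)) a b c" for k
    using c by (cases "k = i") (simp_all add: sv_def P_zero)
  then show "\<exists>c. \<forall>k. P k (\<sigma> k (sv i x k)) a b c" by blast
qed

lemma fold_sv: "distinct xs \<Longrightarrow> foldr vadd (map (\<lambda>i. sv i (u i)) xs) vz = (\<lambda>k. if k \<in> set xs then u k else zero)"
proof (induction xs)
  case Nil then show ?case by simp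
next
  case (Cons a xs)
  show ?case
  proof
    fix k
    show "foldr vadd (map (\<lambda>i. sv i (u i)) (a # xs)) vz k = (if k \<in> set (a # xs) then u k else zero)"
      using Cons by (cases "k = a") (auto simp: vadd_0l vadd_0r sv_def)
  qed
qed

lemma gen: assumes "u \<in> C J" shows "\<exists>us. set us \<subseteq> quasi_kernel (C J) vadd smul \<and> u = foldr vadd us vz"
proof -
  have fin: "finite {i. u i \<noteq> zero}" using assms by (simp add: C_mem)
  obtain xs where xs: "set xs = {i. u i \<noteq> zero}" "distinct xs" using finite_distinct_list[OF fin] by blast
  have "foldr vadd (map (\<lambda>i. sv i (u i)) xs) vz = u"
    using fold_sv[OF xs(2), of u] xs(1) by (auto simp: fun_eq_iff)
  moreover have "set (map (\<lambda>i. sv i (u i)) xs) \<subseteq> quasi_kernel (C J) vadd smul"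
  proof
    fix v assume "v \<in> set (map (\<lambda>i. sv i (u i)) xs)"
    then obtain i where i: "i \<in> set xs" "v = sv i (u i)" by auto
    have "i \<in> J" using i xs assms by (auto simp: C_mem)
    then show "v \<in> quasi_kernel (C J) vadd smul"
      unfolding qk_iff i(2) using sv_C sv_Q by blast
  qed
  ultimately show ?thesis by metis
qed

lemma nvsC: "near_vector_space mul zero one (C J) vadd smul vz"
  unfolding near_vector_space_def
proof (intro conjI)
  show "\<forall>u\<in>C J. \<exists>v\<in>C J. vadd u v = vz" using nv_C nv_add by blast
  show "\<forall>u\<in>C J. \<forall>v\<in>C J. \<forall>w\<in>C J. vadd (vadd u v) w = vadd u (vadd v w)" using vadd_assoc by blast
  show "\<forall>u\<in>C J. \<forall>v\<in>C J. vadd u v = vadd v u" using vadd_comm by blast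
  show "\<forall>a b. \<forall>u\<in>C J. smul a u = smul b u \<longrightarrow> u = vz \<or> a = b" using ffree by blast
  show "\<forall>u\<in>C J. \<exists>us. set us \<subseteq> quasi_kernel (C J) vadd smul \<and> u = foldr vadd us vz" using gen by blast
qed (simp_all add: C_vz C_add vadd_vz C_smul smul_vadd smul_mul smul_one smul_zero)

end

context nvs
begin

lemma R_refl: "R t t"
proof -
  have "(\<sigma> t \<circ> \<rho> t \<circ> conj_map mul one one \<circ> inv (\<sigma> t \<circ> \<rho> t)) x = x" for x
  proof -
    have "(\<sigma> t \<circ> \<rho> t \<circ> conj_map mul one one \<circ> inv (\<sigma> t \<circ> \<rho> t)) x
        = tau t (conj_map mul one one (inv (tau t) x))" by (simp add: tau_def)
    then show ?thesis by (simp add: conj_apply)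
  qed
  then have "\<sigma> t \<circ> \<rho> t \<circ> conj_map mul one one \<circ> inv (\<sigma> t \<circ> \<rho> t) = id" by (simp add: fun_eq_iff)
  then have "nf_aut add mul (\<sigma> t \<circ> \<rho> t \<circ> conj_map mul one one \<circ> inv (\<sigma> t \<circ> \<rho> t))"
    by (simp add: nf_aut_def)
  then show ?thesis unfolding idx_rel_def by (intro exI[of _ one]) simp
qed

lemma rep_vec: assumes "u \<in> C {i. R i t}" "u \<noteq> vz" "\<forall>a b. \<exists>c. \<forall>k. P k (\<sigma> k (u k)) a b c"
  shows "\<exists>a0. a0 \<noteq> zero \<and> (\<forall>a b c. P t a0 a b c \<longrightarrow> (\<forall>k. P k (\<sigma> k (u k)) a b c))"
proof -
  obtain i0 where i0: "u i0 \<noteq> zero" using assms(2) by auto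
  have Ri: "R i0 t" using assms(1) i0 by (auto simp: C_mem)
  obtain a0 where a0: "a0 \<noteq> zero" "\<forall>a b c. P i0 (\<sigma> i0 (u i0)) a b c \<longrightarrow> P t a0 a b c"
    using liftA[OF Ri, of "\<sigma> i0 (u i0)"] i0 by auto
  have "\<forall>k. P k (\<sigma> k (u k)) a b c" if h: "P t a0 a b c" for a b c
  proof -
    obtain c0 where c0: "\<forall>k. P k (\<sigma> k (u k)) a b c0" using assms(3) by blast
    then have "P t a0 a b c0" using a0 by blast
    then have "c = c0" using P_unique[OF a0(1) h] by blast
    then show ?thesis using c0 by simp
  qed
  then show ?thesis using a0(1) by blast
qed

lemma compat_W: assumes "u \<in> quasi_kernel (C {i. R i t}) vadd smul - {vz}"
    "v \<in> quasi_kernel (C {i. R i t}) vadd smul - {vz}"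
  shows "compatible zero (C {i. R i t}) vadd smul u v"
proof -
  have uC: "u \<in> C {i. R i t}" and uQ: "\<forall>a b. \<exists>c. \<forall>k. P k (\<sigma> k (u k)) a b c" and unz: "u \<noteq> vz"
    using assms(1) by (simp_all add: qk_iff)
  have vC: "v \<in> C {i. R i t}" and vQ: "\<forall>a b. \<exists>c. \<forall>k. P k (\<sigma> k (v k)) a b c" and vnz: "v \<noteq> vz"
    using assms(2) by (simp_all add: qk_iff)
  obtain a0 where a0: "a0 \<noteq> zero" "\<forall>a b c. P t a0 a b c \<longrightarrow> (\<forall>k. P k (\<sigma> k (u k)) a b c)"
    using rep_vec[OF uC unz uQ] by blast
  obtain b0 where b0: "b0 \<noteq> zero" "\<forall>a b c. P t b0 a b c \<longrightarrow> (\<forall>k. P k (\<sigma> k (v k)) a b c)"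
    using rep_vec[OF vC vnz vQ] by blast
  define l where "l = inv (tau t) (mul a0 (ninv b0))"
  have tl: "tau t l = mul a0 (ninv b0)" by (simp add: l_def)
  have lnz: "l \<noteq> zero" using a0 b0 by (simp add: l_def)
  have tlb: "mul (tau t l) b0 = a0" using b0 by (simp add: tl)
  define r where "r = vadd u (smul l v)"
  have rC: "r \<in> C {i. R i t}" unfolding r_def by (rule C_add[OF uC C_smul[OF vC]])
  have sr: "\<sigma> k (r k) = add (\<sigma> k (u k)) (mul (tau k l) (\<sigma> k (v k)))" for k
    by (simp add: r_def sig_rho_mul)
  have "\<forall>a b. \<exists>c. \<forall>k. P k (\<sigma> k (r k)) a b c"
  proof (intro allI)
    fix a b
    obtain c where c: "P t a0 a b c" using P_ex by blast
    have hu: "\<forall>k. P k (\<sigma> k (u k)) a b c" using a0 c by blast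
    have "P t b0 (mul a l) (mul b l) (mul c l)" using c P_scale[of t l b0 a b c] tlb by simp
    then have "\<forall>k. P k (\<sigma> k (v k)) (mul a l) (mul b l) (mul c l)" using b0 by blast
    then have hv: "\<forall>k. P k (mul (tau k l) (\<sigma> k (v k))) a b c" using P_scale by blast
    have "P k (\<sigma> k (r k)) a b c" for k unfolding sr using hu hv P_add by blast
    then show "\<exists>c. \<forall>k. P k (\<sigma> k (r k)) a b c" by blast
  qed
  then have "r \<in> quasi_kernel (C {i. R i t}) vadd smul" using rC by (simp add: qk_iff)
  then show ?thesis unfolding compatible_def r_def using lnz by blast
qed

lemma W_regular: "regular_nvs mul zero one (C {i. R i t}) vadd smul vz"
  unfolding regular_nvs_def using nvsC compat_W by blast

lemma W_sub: "subspace (C UNIV) vadd smul (C J)"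
  unfolding subspace_def using C_mono[of J UNIV] C_vz C_add C_smul by blast

lemma W_max: assumes "subspace (C UNIV) vadd smul W'" "regular_nvs mul zero one W' vadd smul vz"
    "C {i. R i t} \<subseteq> W'"
  shows "W' = C {i. R i t}"
proof (rule ccontr)
  let ?W = "C {i. R i t}"
  assume ne: "W' \<noteq> ?W"
  then obtain x where x: "x \<in> W'" "x \<notin> ?W" using assms(3) by blast
  have nv': "near_vector_space mul zero one W' vadd smul vz"
    and comp: "\<forall>u\<in>quasi_kernel W' vadd smul - {vz}. \<forall>v\<in>quasi_kernel W' vadd smul - {vz}.
        compatible zero W' vadd smul u v"
    using assms(2) unfolding regular_nvs_def by blast+
  have gW: "\<forall>u\<in>W'. \<exists>us. set us \<subseteq> quasi_kernel W' vadd smul \<and> u = foldr vadd us vz"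
    using nv' unfolding near_vector_space_def by (elim conjE) assumption
  obtain us where us: "set us \<subseteq> quasi_kernel W' vadd smul" "x = foldr vadd us vz"
    using gW x(1) by blast
  have "\<exists>q\<in>set us. q \<notin> ?W"
  proof (rule ccontr)
    assume "\<not> ?thesis" then have "set us \<subseteq> ?W" by blast
    then have "foldr vadd us vz \<in> ?W" by (induction us) (auto simp: C_vz C_add)
    then show False using x us by simp
  qed
  then obtain q where q: "q \<in> set us" "q \<notin> ?W" by blast
  have qQ: "q \<in> quasi_kernel W' vadd smul" using q us by blast
  then have qW': "q \<in> W'" and qP: "\<forall>a b. \<exists>c. \<forall>k. P k (\<sigma> k (q k)) a b c" by (simp_all add: qk_iff)
  have qV: "q \<in> C UNIV" using qW' assms(1) unfolding subspace_def by blast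
  then obtain j where j: "q j \<noteq> zero" "\<not> R j t" using q(2) by (auto simp: C_mem)
  have qnz: "q \<noteq> vz" using j by auto
  show False
  proof (cases "q t = zero")
    case False
    have "R j t" by (rule key[OF qP]) (simp_all add: j False)
    then show False using j by simp
  next
    case True
    define e where "e = sv t one"
    have eW: "e \<in> ?W" unfolding e_def by (rule sv_C) (simp add: R_refl)
    have enz: "e \<noteq> vz" by (auto simp: e_def sv_def fun_eq_iff)
    have eQ: "e \<in> quasi_kernel W' vadd smul - {vz}"
      using eW assms(3) sv_Q[of t one] enz by (auto simp: qk_iff e_def)
    obtain l where l: "l \<noteq> zero" "vadd e (smul l q) \<in> quasi_kernel W' vadd smul"
      using comp eQ qQ qnz unfolding compatible_def by blast
    define r where "r = vadd e (smul l q)"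
    have rP: "\<forall>a b. \<exists>c. \<forall>k. P k (\<sigma> k (r k)) a b c" using l(2) by (simp add: qk_iff r_def)
    have jt: "j \<noteq> t" using j True by auto
    have rt: "r t = one" by (simp add: r_def vadd_0r True e_def sv_def)
    have rj: "r j \<noteq> zero" using jt j l by (simp add: r_def vadd_0l e_def sv_def)
    have "R j t" by (rule key[OF rP]) (simp_all add: rj rt)
    then show False using j by simp
  qed
qed

lemma W_eq: "ext_zero zero J ` C J = C J"
proof -
  have "ext_zero zero J f = f" if "f \<in> C J" for f
    using that by (auto simp: ext_zero_def C_mem fun_eq_iff)
  then show ?thesis by (metis (no_types, lifting) image_cong image_ident)
qed

end

locale nvsT = nvs add mul zero one \<sigma> \<rho>
  for add mul :: "'a \<Rightarrow> 'a \<Rightarrow> 'a" and zero one :: 'a and \<sigma> \<rho> :: "'i \<Rightarrow> 'a \<Rightarrow> 'a" +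
  fixes T :: "'i set"
  assumes reps: "full_reps (idx_rel add mul zero one \<sigma> \<rho>) T"
begin

definition rep where "rep i = (THE t. t \<in> T \<and> R i t)"
lemma rep: "rep i \<in> T \<and> R i (rep i)"
  using reps unfolding full_reps_def rep_def by (metis (no_types, lifting) theI')
lemma rep_unique: "t \<in> T \<Longrightarrow> R i t \<Longrightarrow> rep i = t"
  using reps rep unfolding full_reps_def by metis

lemma fold_T: "distinct ts \<Longrightarrow> set ts \<subseteq> T \<Longrightarrow> (\<forall>t\<in>set ts. g t \<in> C {i. R i t}) \<Longrightarrow>
  foldr (\<lambda>t acc. vadd (g t) acc) ts vz = (\<lambda>i. if rep i \<in> set ts then g (rep i) i else zero)"
proof (induction ts)
  case Nil then show ?case by simp
next
  case (Cons a ts)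
  have IH: "foldr (\<lambda>t acc. vadd (g t) acc) ts vz = (\<lambda>i. if rep i \<in> set ts then g (rep i) i else zero)"
    using Cons by simp
  show ?case
  proof
    fix i
    show "foldr (\<lambda>t acc. vadd (g t) acc) (a # ts) vz i = (if rep i \<in> set (a # ts) then g (rep i) i else zero)"
    proof (cases "rep i = a")
      case True
      then have "rep i \<notin> set ts" using Cons.prems by simp
      then show ?thesis using True by (simp add: IH vadd_0r)
    next
      case False
      have "\<not> R i a" using False rep_unique Cons.prems by auto
      then have "g a i = zero" using Cons.prems by (auto simp: C_mem)
      then show ?thesis using False by (simp add: IH vadd_0l)
    qed
  qed
qed

lemma ids: "internal_direct_sum (C UNIV) vadd vz T (\<lambda>t. C {i. R i t})"
  unfolding internal_direct_sum_def
proof (intro conjI allI impI ballI)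
  show "\<And>t. t \<in> T \<Longrightarrow> C {i. R i t} \<subseteq> C UNIV" using C_mono by blast
next
  fix v assume vV: "v \<in> C UNIV"
  have fin: "finite (rep ` {i. v i \<noteq> zero})" using vV by (simp add: C_mem)
  obtain ts where ts: "set ts = rep ` {i. v i \<noteq> zero}" "distinct ts"
    using finite_distinct_list[OF fin] by blast
  define g where "g t = (\<lambda>i. if R i t then v i else zero)" for t
  have gC: "\<forall>t\<in>set ts. g t \<in> C {i. R i t}"
  proof
    fix t assume "t \<in> set ts"
    have "{i. g t i \<noteq> zero} \<subseteq> {i. v i \<noteq> zero}" by (auto simp: g_def)
    then show "g t \<in> C {i. R i t}" using vV unfolding C_mem by (auto intro: finite_subset simp: g_def)
  qed
  have tsT: "set ts \<subseteq> T" using ts rep by auto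
  have "foldr (\<lambda>t acc. vadd (g t) acc) ts vz = v"
    using fold_T[OF ts(2) tsT gC] ts(1) rep by (auto simp: fun_eq_iff g_def)
  then show "\<exists>ts g. distinct ts \<and> set ts \<subseteq> T \<and> (\<forall>t\<in>set ts. g t \<in> C {i. R i t}) \<and>
                   v = foldr (\<lambda>t acc. vadd (g t) acc) ts vz"
    using ts(2) tsT gC by metis
next
  fix ts g t
  assume h: "distinct ts \<and> set ts \<subseteq> T \<and> (\<forall>t\<in>set ts. g t \<in> C {i. R i t}) \<and>
             foldr (\<lambda>t acc. vadd (g t) acc) ts vz = vz"
    and t: "t \<in> set ts"
  have f: "(\<lambda>i. if rep i \<in> set ts then g (rep i) i else zero) = vz"
    using fold_T[of ts g] h by simp
  show "g t = vz"
  proof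
    fix i
    show "g t i = zero"
    proof (cases "R i t")
      case True
      then have "rep i = t" using rep_unique h t by blast
      then show ?thesis using f t by (metis)
    next
      case False
      then show ?thesis using h t by (auto simp: C_mem)
    qed
  qed
qed

lemma main: "regular_decomposition_family mul zero one (C UNIV) vadd smul vz
           T (\<lambda>t. ext_zero zero {i. R i t} ` C {i. R i t})"
  unfolding W_eq regular_decomposition_family_def max_regular_subspace_def
  using ids W_sub W_regular W_max by blast

end

theorem mainTheorem8:
  fixes add mul :: "'a \<Rightarrow> 'a \<Rightarrow> 'a" and zero one :: 'a
    and \<sigma> \<rho> :: "'i \<Rightarrow> 'a \<Rightarrow> 'a" and T :: "'i set"
  assumes "near_field add mul zero one"
    and "\<forall>i. mult_aut mul one (\<sigma> i)"
    and "\<forall>i. mult_aut mul one (\<rho> i)"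
    and "full_reps (idx_rel add mul zero one \<sigma> \<rho>) T"
  shows "regular_decomposition_family mul zero one
           (fs_carrier zero UNIV) (fs_add add zero \<sigma> UNIV) (fs_smul mul zero \<rho> UNIV) (\<lambda>i. zero)
           T (\<lambda>t. ext_zero zero {i. idx_rel add mul zero one \<sigma> \<rho> i t} `
                   fs_carrier zero {i. idx_rel add mul zero one \<sigma> \<rho> i t})"
proof -
  interpret nvsT add mul zero one \<sigma> \<rho> T
    by (intro nvsT.intro nvs.intro nfl.intro nvs_axioms.intro nvsT_axioms.intro assms)
  show ?thesis by (rule main)
qed

end
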